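(* Let $0<c<1$. For $\lambda\in(0,1)$ and $u\ge1$ put $I_u(\lambda)=\int_u^\infty\frac{dx}{\sqrt{x(x-1)(x-\lambda)}}$ (positive square root). Then $\lambda\mapsto I_{1/c^2}(\lambda)/I_1(\lambda)$ is strictly decreasing on $(0,1)$, tends to $0$ as $\lambda\to1^-$, and tends to $1-\frac{2}{\pi}\arctan\sqrt{c^{-2}-1}$ as $\lambda\to0^+$. For $\lambda\in(1,1/c^2)$, with $I_{1/c^2}(\lambda)$ defined by the same formula and $\omega_2(\lambda)=\int_0^1\frac{dx}{\sqrt{x(x-1)(x-\lambda)}}$ (positive square root), the function $\lambda\mapsto I_{1/c^2}(\lambda)/\omega_2(\lambda)$ is strictly increasing on $(1,1/c^2)$, tends to $0$ as $\lambda\to1^+$ and to $1$ as $\lambda\to (1/c^2)^-$. *)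

theory Defs
  imports "HOL-Analysis.Analysis"
begin

definition ell_integrand :: "real \<Rightarrow> real \<Rightarrow> real" where
  "ell_integrand l x = 1 / sqrt (x * (x - 1) * (x - l))"

definition I_int :: "real \<Rightarrow> real \<Rightarrow> real" where
  "I_int u l = integral {u..} (ell_integrand l)"

definition omega2 :: "real \<Rightarrow> real" where
  "omega2 l = integral {0..1} (ell_integrand l)"

end

theory Submission
  imports Defs "HOL-Real_Asymp.Real_Asymp"
begin


definition kf :: "real \<Rightarrow> real \<Rightarrow> real" where
  "kf m s = 1 / sqrt (s * (1 - s) * (1 - m * s))"

definition FF :: "real \<Rightarrow> real \<Rightarrow> real" where
  "FF a m = integral {0..a} (kf m)"

lemma kf0_has_integral:
  assumes "0 \<le> a" "a \<le> 1"
  shows "(kf 0 has_integral (2 * arcsin (sqrt a))) {0..a}"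
proof -
  have "(kf 0 has_integral (2 * arcsin (sqrt a) - 2 * arcsin (sqrt 0))) {0..a}"
  proof (rule fundamental_theorem_of_calculus_interior)
    show "0 \<le> a" by fact
    show "continuous_on {0..a} (\<lambda>s. 2 * arcsin (sqrt s))"
      using assms by (intro continuous_intros) (auto intro!: order_trans[OF _ real_sqrt_ge_zero])
    fix s assume s: "s \<in> {0<..<a}"
    then have s1: "0 < s" "s < 1" using assms by auto
    have d: "DERIV arcsin (sqrt s) :> inverse (sqrt (1 - (sqrt s)\<^sup>2))"
    proof (rule DERIV_arcsin)
      show "-1 < sqrt s" using s1 real_sqrt_gt_zero[of s] by linarith
      show "sqrt s < 1" using s1 by simp
    qed
    have "((\<lambda>s. arcsin (sqrt s)) has_real_derivative
            (inverse (sqrt (1 - (sqrt s)\<^sup>2)) * (inverse (sqrt s) / 2))) (at s)"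
      by (rule DERIV_chain2[of arcsin _ sqrt]) (rule d, rule DERIV_real_sqrt, use s1 in auto)
    then have "((\<lambda>s. 2 * arcsin (sqrt s)) has_real_derivative
            2 * (inverse (sqrt (1 - (sqrt s)\<^sup>2)) * (inverse (sqrt s) / 2))) (at s)"
      by (rule DERIV_cmult)
    moreover have "2 * (inverse (sqrt (1 - (sqrt s)\<^sup>2)) * (inverse (sqrt s) / 2)) = kf 0 s"
      using s1 by (simp add: kf_def real_sqrt_mult[symmetric] field_simps)
    ultimately show "((\<lambda>s. 2 * arcsin (sqrt s)) has_vector_derivative kf 0 s) (at s)"
      by (simp add: has_real_derivative_iff_has_vector_derivative)
  qed
  then show ?thesis by simp
qed

lemma kf_pos:
  assumes "0 \<le> m" "m < 1" "0 < s" "s < 1"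
  shows "0 < kf m s"
proof -
  have "m * s < 1" using assms by (smt (verit) mult_le_cancel_right2)
  then show ?thesis using assms by (simp add: kf_def)
qed

lemma kf_ge1:
  assumes "0 \<le> m" "m < 1" "0 < s" "s < 1"
  shows "1 \<le> kf m s"
proof -
  have ms: "m * s < 1" "0 \<le> m * s" using assms by (smt (verit) mult_le_cancel_right2, simp)
  have "s * (1 - s) * (1 - m * s) \<le> 1 * 1 * 1"
    using assms ms by (intro mult_mono) auto
  moreover have "0 < s * (1 - s) * (1 - m * s)" using assms ms by simp
  ultimately show ?thesis by (simp add: kf_def)
qed

lemma kf_mono_le:
  assumes "0 \<le> m1" "m1 \<le> m2" "m2 < 1" "0 < s" "s < 1"
  shows "kf m1 s \<le> kf m2 s"
proof -
  have ms: "m2 * s < 1" using assms by (smt (verit) mult_le_cancel_right2)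
  have "m1 * s \<le> m2 * s" using assms by (simp add: mult_right_mono)
  then have "s * (1 - s) * (1 - m2 * s) \<le> s * (1 - s) * (1 - m1 * s)"
    using assms by (intro mult_left_mono) auto
  moreover have "0 < s * (1 - s) * (1 - m2 * s)" using assms ms by simp
  ultimately show ?thesis unfolding kf_def
    by (intro divide_left_mono mult_pos_pos) auto
qed

lemma kf_upper0:
  assumes "0 \<le> m" "m < 1" "0 < s" "s < 1"
  shows "kf m s \<le> kf 0 s / sqrt (1 - m)"
proof -
  have ms: "m * s < 1" "m * s \<le> m" using assms by (smt (verit) mult_le_cancel_right2, simp add: mult_left_le)
  have "s * (1 - s) * (1 - m) \<le> s * (1 - s) * (1 - m * s)"
    using assms ms by (intro mult_left_mono) auto
  moreover have "0 < s * (1 - s) * (1 - m)" using assms by simp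
  ultimately have "1 / sqrt (s * (1 - s) * (1 - m * s)) \<le> 1 / sqrt (s * (1 - s) * (1 - m))"
    by (intro divide_left_mono mult_pos_pos) auto
  then show ?thesis by (simp add: kf_def real_sqrt_mult)
qed

lemma kf_cont: 
  assumes "0 \<le> m" "m < 1" "a \<le> 1"
  shows "continuous_on {0<..<a} (kf m)"
proof -
  have "\<And>s. s \<in> {0<..<a} \<Longrightarrow> m * s < 1" using assms
    by (auto, smt (verit) mult_le_cancel_right2)
  then have "\<And>s. s \<in> {0<..<a} \<Longrightarrow> m * s \<noteq> 1" by fastforce
  then show ?thesis unfolding kf_def using assms
    by (intro continuous_intros) auto
qed

lemma kf_absint_Ioo:
  assumes "0 \<le> m" "m < 1" "0 \<le> a" "a \<le> 1"
  shows "kf m absolutely_integrable_on {0<..<a}"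
proof (rule measurable_bounded_by_integrable_imp_absolutely_integrable)
  show "kf m \<in> borel_measurable (lebesgue_on {0<..<a})"
    by (rule continuous_imp_measurable_on_sets_lebesgue[OF kf_cont]) (use assms in auto)
  show "{0<..<a} \<in> sets lebesgue" by simp
  have "kf 0 integrable_on {0<..<a}"
    using kf0_has_integral[OF assms(3,4)] has_integral_Icc_iff_Ioo by blast
  then show "(\<lambda>s. kf 0 s / sqrt (1 - m)) integrable_on {0<..<a}"
    by (rule integrable_on_divide)
  fix s assume "s \<in> {0<..<a}"
  then show "norm (kf m s) \<le> kf 0 s / sqrt (1 - m)"
    using assms kf_upper0[of m s] kf_pos[of m s] by auto
qed

lemma kf_int_Icc:
  assumes "0 \<le> m" "m < 1" "0 \<le> a" "a \<le> 1"
  shows "kf m integrable_on {0..a}"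
  using kf_absint_Ioo[OF assms] integrable_on_Icc_iff_Ioo set_lebesgue_integral_eq_integral(1) by blast

lemma kf_int_sub:
  assumes "0 \<le> m" "m < 1" "0 \<le> a" "a \<le> b" "b \<le> 1"
  shows "kf m integrable_on {a..b}"
  by (rule integrable_subinterval_real[OF kf_int_Icc[of m 1]]) (use assms in auto)

lemma integral_le_open:
  fixes f g :: "real \<Rightarrow> real"
  assumes "f integrable_on {a..b}" "g integrable_on {a..b}" "\<And>x. x \<in> {a<..<b} \<Longrightarrow> f x \<le> g x"
  shows "integral {a..b} f \<le> integral {a..b} g"
  unfolding integral_open_interval_real
  by (rule integral_le) (use assms integrable_on_Icc_iff_Ioo in auto)

lemma FF_0: 
  assumes "0 \<le> a" "a \<le> 1"
  shows "FF a 0 = 2 * arcsin (sqrt a)"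
  using kf0_has_integral[OF assms] by (simp add: FF_def integral_unique)

lemma FF_ge:
  assumes "0 \<le> m" "m < 1" "0 \<le> a" "a \<le> 1"
  shows "a \<le> FF a m"
proof -
  have "integral {0..a} (\<lambda>_. 1::real) \<le> integral {0..a} (kf m)"
    by (rule integral_le_open) (use assms kf_int_Icc kf_ge1 in auto)
  then show ?thesis using assms by (simp add: FF_def)
qed

lemma FF_mono_m:
  assumes "0 \<le> m1" "m1 \<le> m2" "m2 < 1" "0 \<le> a" "a \<le> 1"
  shows "FF a m1 \<le> FF a m2"
  unfolding FF_def
  by (rule integral_le_open) (use assms kf_int_Icc kf_mono_le in auto)

lemma FF_upper0:
  assumes "0 \<le> m" "m < 1" "0 \<le> a" "a \<le> 1"
  shows "FF a m \<le> FF a 0 / sqrt (1 - m)"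
proof -
  have "integral {0..a} (kf m) \<le> integral {0..a} (\<lambda>s. kf 0 s / sqrt (1 - m))"
    by (rule integral_le_open) (use assms kf_int_Icc kf_upper0 integrable_on_divide in auto)
  then show ?thesis by (simp add: FF_def)
qed

lemma FF_split:
  assumes "0 \<le> m" "m < 1" "0 \<le> a" "a \<le> 1"
  shows "FF 1 m = FF a m + integral {a..1} (kf m)"
  unfolding FF_def
  using Henstock_Kurzweil_Integration.integral_combine[where a=0 and c=a and b=1 and f="kf m"] assms kf_int_Icc[of m 1] by auto

lemma kf_nonneg_int:
  assumes "0 \<le> m" "m < 1" "0 \<le> a" "a \<le> b" "b \<le> 1"
  shows "0 \<le> integral {a..b} (kf m)"
proof -
  have "integral {a..b} (\<lambda>_. 0::real) \<le> integral {a..b} (kf m)"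
    by (rule integral_le_open) (use assms kf_int_sub kf_pos[of m] in \<open>auto intro: less_imp_le\<close>)
  then show ?thesis by simp
qed



lemma int_ge_const:
  assumes "0 \<le> m" "m < 1" "0 \<le> a" "a \<le> b" "b \<le> 1"
  shows "b - a \<le> integral {a..b} (kf m)"
proof -
  have "integral {a..b} (\<lambda>_. 1::real) \<le> integral {a..b} (kf m)"
    by (rule integral_le_open) (use assms kf_int_sub kf_ge1 in auto)
  then show ?thesis using assms by simp
qed

lemma FF_ratio_strict:
  assumes m: "0 \<le> m1" "m1 < m2" "m2 < 1" and a: "0 < a" "a < 1"
  shows "FF a m2 / FF 1 m2 < FF a m1 / FF 1 m1"
proof -
  define h where "h s = sqrt ((1 - m1 * s) / (1 - m2 * s))" for s
  have ms: "m1 * s < 1" "m2 * s < 1" if "0 \<le> s" "s < 1" for s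
    using m that by (smt (verit) mult_le_cancel_right2)+
  have kf_eq: "kf m2 s = h s * kf m1 s" if "0 < s" "s < 1" for s
  proof -
    have p: "0 < 1 - m1 * s" "0 < 1 - m2 * s" using ms[of s] that by auto
    have q: "0 < sqrt (1 - m1 * s)" "0 < sqrt (1 - m2 * s)" "0 < sqrt (s * (1 - s))"
      using p that by auto
    have "kf m2 s = 1 / (sqrt (s * (1 - s)) * sqrt (1 - m2 * s))"
      by (simp add: kf_def real_sqrt_mult)
    moreover have "h s * kf m1 s = sqrt (1 - m1 * s) / sqrt (1 - m2 * s) * (1 / (sqrt (s * (1 - s)) * sqrt (1 - m1 * s)))"
      by (simp add: kf_def h_def real_sqrt_mult real_sqrt_divide)
    ultimately show ?thesis using q by (simp add: field_simps)
  qed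
  have h_mono: "h s < h t" if "0 \<le> s" "s < t" "t < 1" for s t
  proof -
    have p: "0 < 1 - m2 * s" "0 < 1 - m2 * t" "0 < 1 - m1 * t"
      using ms[of s] ms[of t] that by auto
    have "(1 - m1 * s) * (1 - m2 * t) < (1 - m1 * t) * (1 - m2 * s)"
    proof -
      have "(m2 - m1) * (s - t) < 0" using m that by (simp add: mult_pos_neg)
      then show ?thesis by (simp add: algebra_simps)
    qed
    then have "(1 - m1 * s) / (1 - m2 * s) < (1 - m1 * t) / (1 - m2 * t)"
      using p by (simp add: divide_simps)
    then show ?thesis unfolding h_def by simp
  qed
  define H where "H = h a"
  define \<delta> where "\<delta> = H - h (a/2)"
  have \<delta>pos: "0 < \<delta>" using h_mono[of "a/2" a] a by (simp add: \<delta>_def H_def)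
  have i1: "kf m1 integrable_on {c..d}" "kf m2 integrable_on {c..d}"
    if "0 \<le> c" "c \<le> d" "d \<le> 1" for c d
    using kf_int_sub[of m1 c d] kf_int_sub[of m2 c d] m that by auto
  have i2: "(\<lambda>s. H * kf m1 s - kf m2 s) integrable_on {c..d}"
    if "0 \<le> c" "c \<le> d" "d \<le> 1" for c d
    using i1[OF that] by (intro integrable_diff integrable_on_mult_right) auto
  have A: "\<delta> * (a/2) \<le> integral {0..a} (\<lambda>s. H * kf m1 s - kf m2 s)"
  proof -
    have "integral {0..a/2} (\<lambda>_. \<delta>) \<le> integral {0..a/2} (\<lambda>s. H * kf m1 s - kf m2 s)"
    proof (rule integral_le_open)
      show "(\<lambda>_. \<delta>) integrable_on {0..a/2}" by (rule integrable_const_ivl)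
      show "(\<lambda>s. H * kf m1 s - kf m2 s) integrable_on {0..a/2}" using i2 a by auto
      fix s assume s: "s \<in> {0<..<a/2}"
      then have s1: "0 < s" "s < 1" using a by auto
      have "h s < h (a/2)" using h_mono[of s "a/2"] s a by auto
      then have d: "\<delta> \<le> H - h s" by (simp add: \<delta>_def)
      have "\<delta> * 1 \<le> (H - h s) * kf m1 s"
        using d \<delta>pos kf_ge1[of m1 s] m s1 by (intro mult_mono) auto
      then show "\<delta> \<le> H * kf m1 s - kf m2 s" using kf_eq[OF s1] by (simp add: algebra_simps)
    qed
    moreover have "integral {a/2..a} (\<lambda>_. 0) \<le> integral {a/2..a} (\<lambda>s. H * kf m1 s - kf m2 s)"
    proof (rule integral_le_open)
      show "(\<lambda>_. 0) integrable_on {a/2..a}" by (rule integrable_const_ivl)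
      show "(\<lambda>s. H * kf m1 s - kf m2 s) integrable_on {a/2..a}" using i2 a by auto
      fix s assume s: "s \<in> {a/2<..<a}"
      then have s1: "0 < s" "s < 1" using a by auto
      have "h s < H" using h_mono[of s a] s a by (auto simp: H_def)
      then have "0 \<le> (H - h s) * kf m1 s"
        using kf_pos[of m1 s] m s1 by auto
      then show "0 \<le> H * kf m1 s - kf m2 s" using kf_eq[OF s1] by (simp add: algebra_simps)
    qed
    moreover have "integral {0..a/2} (\<lambda>s. H * kf m1 s - kf m2 s) + integral {a/2..a} (\<lambda>s. H * kf m1 s - kf m2 s)
        = integral {0..a} (\<lambda>s. H * kf m1 s - kf m2 s)"
      using Henstock_Kurzweil_Integration.integral_combine[where a=0 and c="a/2" and b=a and f="\<lambda>s. H * kf m1 s - kf m2 s"]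
        i2[of 0 a] a by auto
    ultimately show ?thesis using a by (simp add: mult.commute)
  qed
  have B: "0 \<le> integral {a..1} (\<lambda>s. kf m2 s - H * kf m1 s)"
  proof -
    have "integral {a..1} (\<lambda>_. 0) \<le> integral {a..1} (\<lambda>s. kf m2 s - H * kf m1 s)"
    proof (rule integral_le_open)
      show "(\<lambda>_. 0) integrable_on {a..1}" by (rule integrable_const_ivl)
      show "(\<lambda>s. kf m2 s - H * kf m1 s) integrable_on {a..1}"
        using i1[of a 1] a by (intro integrable_diff integrable_on_mult_right) auto
      fix s assume s: "s \<in> {a<..<1}"
      then have s1: "0 < s" "s < 1" using a by auto
      have "H < h s" using h_mono[of a s] s a by (auto simp: H_def)
      then have "0 \<le> (h s - H) * kf m1 s"
        using kf_pos[of m1 s] m s1 by auto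
      then show "0 \<le> kf m2 s - H * kf m1 s" using kf_eq[OF s1] by (simp add: algebra_simps)
    qed
    then show ?thesis by simp
  qed
  define A1 where "A1 = FF a m1"
  define A2 where "A2 = FF a m2"
  define T1 where "T1 = integral {a..1} (kf m1)"
  define T2 where "T2 = integral {a..1} (kf m2)"
  have eA: "integral {0..a} (\<lambda>s. H * kf m1 s - kf m2 s) = H * A1 - A2"
    unfolding A1_def A2_def FF_def using i1[of 0 a] a
    by (subst integral_diff) (auto simp: integral_mult_right intro: integrable_on_mult_right)
  have eB: "integral {a..1} (\<lambda>s. kf m2 s - H * kf m1 s) = T2 - H * T1"
    unfolding T1_def T2_def using i1[of a 1] a
    by (subst integral_diff) (auto simp: integral_mult_right intro: integrable_on_mult_right)
  have A': "A2 \<le> H * A1 - \<delta> * (a/2)" using A eA by simp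
  have B': "H * T1 \<le> T2" using B eB by simp
  have T1pos: "0 < T1" using int_ge_const[of m1 a 1] m a unfolding T1_def by auto
  have A1pos: "0 < A1" using FF_ge[of m1 a] m a unfolding A1_def by auto
  have A2pos: "0 < A2" using FF_ge[of m2 a] m a unfolding A2_def by auto
  have eps: "0 < \<delta> * (a/2)" using \<delta>pos a by simp
  have "A2 * T1 \<le> (H * A1 - \<delta> * (a/2)) * T1" using A' T1pos by (intro mult_right_mono) auto
  also have "\<dots> < H * A1 * T1" using eps T1pos by (simp add: algebra_simps)
  also have "\<dots> \<le> A1 * T2" using B' A1pos by (metis mult.assoc mult.commute mult_left_mono less_imp_le)
  finally have key: "A2 * T1 < A1 * T2" .
  have F1: "FF 1 m1 = A1 + T1" "FF 1 m2 = A2 + T2"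
    unfolding A1_def A2_def T1_def T2_def using FF_split[of m1 a] FF_split[of m2 a] m a by auto
  have "0 \<le> T2" using B' T1pos \<open>0 < \<delta>\<close> unfolding T2_def
    using kf_nonneg_int[of m2 a 1] m a by auto
  then show ?thesis unfolding F1 A1_def[symmetric] A2_def[symmetric]
    using key A1pos A2pos T1pos by (simp add: divide_simps algebra_simps)
qed



lemma cov:
  fixes f :: "real \<Rightarrow> real"
  assumes b: "0 < b" and u: "0 < u"
    and ai: "(\<lambda>s. b / s\<^sup>2 * f (b / s)) absolutely_integrable_on {0<..b/u}"
  shows "integral {u..} f = integral {0<..b/u} (\<lambda>s. b / s\<^sup>2 * f (b / s))"
proof -
  let ?S = "{0<..b/u}"
  have der: "((\<lambda>s. b / s) has_field_derivative (- (b / s\<^sup>2))) (at s within ?S)" if "s \<in> ?S" for s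
  proof -
    have "s \<noteq> 0" using that by auto
    then have "((\<lambda>s. b / s) has_field_derivative (- (b / s\<^sup>2))) (at s)"
      by (auto intro!: derivative_eq_intros simp: power2_eq_square field_simps)
    then show ?thesis by (rule has_field_derivative_at_within)
  qed
  have inj: "inj_on (\<lambda>s. b / s) ?S" using b by (auto simp: inj_on_def field_simps)
  have img: "(\<lambda>s. b / s) ` ?S = {u..}"
  proof
    show "(\<lambda>s. b / s) ` ?S \<subseteq> {u..}"
      using b u by (auto simp: field_simps)
    show "{u..} \<subseteq> (\<lambda>s. b / s) ` ?S"
    proof
      fix x assume "x \<in> {u..}"
      then have x: "u \<le> x" by auto
      then have "b / x \<in> ?S" using b u by (auto simp: field_simps intro: mult_left_mono)
      moreover have "x = b / (b / x)" using b u x by simp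
      ultimately show "x \<in> (\<lambda>s. b / s) ` ?S" by blast
    qed
  qed
  have eq: "\<bar>- (b / s\<^sup>2)\<bar> * f (b / s) = b / s\<^sup>2 * f (b / s)" for s
    using b by simp
  have "(\<lambda>s. \<bar>- (b / s\<^sup>2)\<bar> * f (b / s)) absolutely_integrable_on ?S \<and>
        integral ?S (\<lambda>s. \<bar>- (b / s\<^sup>2)\<bar> * f (b / s)) = integral ?S (\<lambda>s. b / s\<^sup>2 * f (b / s))"
    unfolding eq using ai by simp
  then have "f absolutely_integrable_on (\<lambda>s. b / s) ` ?S \<and>
        integral ((\<lambda>s. b / s) ` ?S) f = integral ?S (\<lambda>s. b / s\<^sup>2 * f (b / s))"
    using has_absolute_integral_change_of_variables_1'[of ?S "\<lambda>s. b / s" "\<lambda>s. - (b / s\<^sup>2)" f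
       "integral ?S (\<lambda>s. b / s\<^sup>2 * f (b / s))"] der inj by auto
  then show ?thesis unfolding img by simp
qed

lemma Ioc_Icc_integral:
  fixes f :: "real \<Rightarrow> real"
  shows "integral {a<..b} f = integral {a..b} f"
  by (rule integral_spike_set; rule negligible_subset[of "{a}"]) auto

lemma Ioc_Icc_absint:
  fixes f :: "real \<Rightarrow> real"
  shows "f absolutely_integrable_on {a<..b} \<longleftrightarrow> f absolutely_integrable_on {a<..<b}"
  by (rule absolutely_integrable_spike_set_eq; rule negligible_subset[of "{b}"]) auto

lemma ell_inv:
  assumes "0 < s"
  shows "1 / s\<^sup>2 * ell_integrand l (1 / s) = kf l s"
proof -
  have e: "(1/s) * (1/s - 1) * (1/s - l) = (s * (1 - s) * (1 - l * s)) / (s\<^sup>2)\<^sup>2"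
    using assms by (simp add: field_simps power2_eq_square)
  show ?thesis
    unfolding ell_integrand_def kf_def e real_sqrt_divide real_sqrt_abs using assms
    by simp
qed

lemma ell_scale:
  assumes "0 < s" "0 < l"
  shows "l / s\<^sup>2 * ell_integrand l (l / s) = ell_integrand l s"
proof -
  have e: "(l/s) * (l/s - 1) * (l/s - l) = l\<^sup>2 * (s * (s - 1) * (s - l)) / (s\<^sup>2)\<^sup>2"
    using assms by (simp add: field_simps power2_eq_square)
  show ?thesis
    unfolding ell_integrand_def e real_sqrt_divide real_sqrt_mult[of "l\<^sup>2"] real_sqrt_abs using assms
    by simp
qed

lemma ell_kf:
  assumes "1 < l"
  shows "ell_integrand l s = sqrt (1 / l) * kf (1 / l) s"
proof -
  have e: "s * (s - 1) * (s - l) = l * (s * (1 - s) * (1 - 1 / l * s))"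
    using assms by (simp add: field_simps)
  show ?thesis unfolding ell_integrand_def kf_def e real_sqrt_mult using assms
    by (simp add: real_sqrt_divide)
qed



lemma I_part1:
  assumes "0 < l" "l < 1" "1 \<le> u"
  shows "I_int u l = FF (1 / u) l"
proof -
  have u: "0 < u" "1 / u \<le> 1" "0 \<le> 1/u" using assms by auto
  have ai: "kf l absolutely_integrable_on {0<..1/u}"
    using kf_absint_Ioo[of l "1/u"] assms u Ioc_Icc_absint by auto
  have ai2: "(\<lambda>s. 1 / s\<^sup>2 * ell_integrand l (1 / s)) absolutely_integrable_on {0<..1/u}"
    by (rule absolutely_integrable_spike[OF ai, of "{}"], simp, rule ell_inv, auto)
  have "I_int u l = integral {0<..1/u} (\<lambda>s. 1 / s\<^sup>2 * ell_integrand l (1 / s))"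
    unfolding I_int_def by (rule cov[OF _ u(1) ai2]) simp
  also have "\<dots> = integral {0<..1/u} (kf l)"
    by (rule integral_cong, rule ell_inv, auto)
  also have "\<dots> = FF (1/u) l" by (simp add: FF_def Ioc_Icc_integral)
  finally show ?thesis .
qed

lemma I_part2:
  assumes "1 < l" "l \<le> u"
  shows "I_int u l = sqrt (1 / l) * FF (l / u) (1 / l)"
proof -
  have u: "0 < u" "l / u \<le> 1" "0 \<le> l/u" "0 < l" using assms by auto
  have ai: "kf (1/l) absolutely_integrable_on {0<..l/u}"
    using kf_absint_Ioo[of "1/l" "l/u"] assms u Ioc_Icc_absint by auto
  then have ai1: "(\<lambda>s. sqrt (1/l) *\<^sub>R kf (1/l) s) absolutely_integrable_on {0<..l/u}"
    by (rule absolutely_integrable_scaleR_left)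
  have ai2: "(\<lambda>s. l / s\<^sup>2 * ell_integrand l (l / s)) absolutely_integrable_on {0<..l/u}"
    by (rule absolutely_integrable_spike[OF ai1, of "{}"], simp, subst ell_scale, use u in auto, simp add: ell_kf[OF assms(1)])
  have "I_int u l = integral {0<..l/u} (\<lambda>s. l / s\<^sup>2 * ell_integrand l (l / s))"
    unfolding I_int_def by (rule cov[OF u(4) u(1) ai2])
  also have "\<dots> = integral {0<..l/u} (\<lambda>s. sqrt (1/l) * kf (1/l) s)"
    by (rule integral_cong, subst ell_scale, use u in auto, simp add: ell_kf[OF assms(1)])
  also have "\<dots> = sqrt (1/l) * FF (l/u) (1/l)" by (simp add: FF_def Ioc_Icc_integral)
  finally show ?thesis .
qed

lemma omega2_eq:
  assumes "1 < l"
  shows "omega2 l = sqrt (1 / l) * FF 1 (1 / l)"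
  unfolding omega2_def FF_def ell_kf[OF assms] by simp



lemma FF_upper:
  assumes "0 \<le> m" "m < 1" "0 \<le> a" "a \<le> b" "b < 1"
  shows "FF a m \<le> 2 * sqrt a / (1 - b)"
proof -
  have hi: "((\<lambda>s. 1 / (sqrt s * (1 - b))) has_integral (2 * sqrt a / (1 - b) - 2 * sqrt 0 / (1 - b))) {0..a}"
  proof (rule fundamental_theorem_of_calculus_interior)
    show "0 \<le> a" by fact
    show "continuous_on {0..a} (\<lambda>s. 2 * sqrt s / (1 - b))"
      using assms by (intro continuous_intros) auto
    fix s assume s: "s \<in> {0<..<a}"
    have "((\<lambda>s. 2 * sqrt s / (1 - b)) has_real_derivative (2 * (inverse (sqrt s) / 2) / (1 - b))) (at s)"
      using s by (intro DERIV_cdivide DERIV_cmult DERIV_real_sqrt) auto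
    moreover have "2 * (inverse (sqrt s) / 2) / (1 - b) = 1 / (sqrt s * (1 - b))"
      by (simp add: field_simps)
    ultimately show "((\<lambda>s. 2 * sqrt s / (1 - b)) has_vector_derivative 1 / (sqrt s * (1 - b))) (at s)"
      by (simp add: has_real_derivative_iff_has_vector_derivative)
  qed
  have "integral {0..a} (kf m) \<le> integral {0..a} (\<lambda>s. 1 / (sqrt s * (1 - b)))"
  proof (rule integral_le_open)
    show "kf m integrable_on {0..a}" using kf_int_Icc assms by auto
    show "(\<lambda>s. 1 / (sqrt s * (1 - b))) integrable_on {0..a}" using hi by blast
    fix s assume s: "s \<in> {0<..<a}"
    have ms: "m * s \<le> s" using assms s by (simp add: mult_left_le_one_le)
    have s': "0 < s" "s < a" using s by auto
    have mb: "m * s \<le> b" using ms s' assms by linarith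
    have "s * (1 - b) * (1 - b) \<le> s * (1 - s) * (1 - m * s)"
      using assms s ms mb by (intro mult_mono) auto
    then have A: "sqrt (s * (1 - b) * (1 - b)) \<le> sqrt (s * (1 - s) * (1 - m * s))"
      by (rule real_sqrt_le_mono)
    moreover have "sqrt (s * (1 - b) * (1 - b)) = sqrt s * (1 - b)"
      using assms by (simp add: real_sqrt_mult mult.assoc)
    moreover have "0 < sqrt s * (1 - b)" using assms s by simp
    ultimately have X: "sqrt s * (1 - b) \<le> sqrt (s * (1 - s) * (1 - m * s))" and Y: "0 < sqrt s * (1 - b)" by auto
    have Z: "0 < sqrt (s * (1 - s) * (1 - m * s)) * (sqrt s * (1 - b))"
      by (rule mult_pos_pos) (use X Y in linarith, rule Y)
    show "kf m s \<le> 1 / (sqrt s * (1 - b))"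
      unfolding kf_def by (rule divide_left_mono[OF X _ Z]) simp
  qed
  then show ?thesis using integral_unique[OF hi] by (simp add: FF_def)
qed

lemma FF_lower_ln:
  assumes "0 < m" "m < 1"
  shows "- ln (1 - m) \<le> FF 1 m"
proof -
  have pos: "0 < 1 - m * s" if "s \<le> 1" for s
  proof -
    have "m * s \<le> m * 1" using assms that by (intro mult_left_mono) auto
    then show ?thesis using assms by linarith
  qed
  have hi: "((\<lambda>s. 1 / (1 - m * s)) has_integral (- ln (1 - m * 1) / m - (- ln (1 - m * 0) / m))) {0..1}"
  proof (rule fundamental_theorem_of_calculus_interior)
    show "(0::real) \<le> 1" by simp
    show "continuous_on {0..1} (\<lambda>s. - ln (1 - m * s) / m)"
    proof -
      have ne: "m * s \<noteq> 1" if "s \<le> 1" for s using pos[OF that] by auto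
      show ?thesis using ne assms by (intro continuous_intros) auto
    qed
    fix s assume s: "s \<in> {0<..<(1::real)}"
    have p: "0 < 1 - m * s" using s pos[of s] by auto
    have "((\<lambda>s. - ln (1 - m * s) / m) has_real_derivative 1 / (1 - m * s)) (at s)"
      using p assms by (auto intro!: derivative_eq_intros simp: field_simps)
    then show "((\<lambda>s. - ln (1 - m * s) / m) has_vector_derivative 1 / (1 - m * s)) (at s)"
      by (simp add: has_real_derivative_iff_has_vector_derivative)
  qed
  have "integral {0..1} (\<lambda>s. 1 / (1 - m * s)) \<le> integral {0..1} (kf m)"
  proof (rule integral_le_open)
    show "kf m integrable_on {0..1}" using kf_int_Icc assms by auto
    show "(\<lambda>s. 1 / (1 - m * s)) integrable_on {0..1}" using hi by blast
    fix s assume s: "s \<in> {0<..<(1::real)}"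
    have ms: "m * s \<le> s" using assms s by (simp add: mult_left_le_one_le)
    have p: "0 < 1 - m * s" using pos[of s] s by auto
    have "s * (1 - s) * (1 - m * s) \<le> 1 * (1 - m * s) * (1 - m * s)"
      using assms s ms p by (intro mult_mono) auto
    then have "sqrt (s * (1 - s) * (1 - m * s)) \<le> sqrt ((1 - m * s)\<^sup>2)"
      by (intro real_sqrt_le_mono) (simp add: power2_eq_square)
    then have "sqrt (s * (1 - s) * (1 - m * s)) \<le> 1 - m * s"
      using p by simp
    moreover have "0 < s * (1 - s) * (1 - m * s)" using s p by simp
    ultimately show "1 / (1 - m * s) \<le> kf m s"
      unfolding kf_def using p by (intro divide_left_mono) auto
  qed
  moreover have "- ln (1 - m) \<le> - ln (1 - m) / m"
  proof -
    define L where "L = - ln (1 - m)"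
    have "0 < L" using assms by (simp add: L_def)
    then have "L * m \<le> L * 1" using assms by (intro mult_left_mono) auto
    then have "L \<le> L / m" using assms by (simp add: le_divide_eq)
    then show ?thesis by (simp add: L_def)
  qed
  ultimately show ?thesis using integral_unique[OF hi] by (simp add: FF_def)
qed

lemma tail_upper:
  assumes "0 \<le> m" "m \<le> m0" "m0 < 1" "1/2 \<le> a" "a \<le> 1"
  shows "integral {a..1} (kf m) \<le> 2 * sqrt 2 * sqrt (1 - a) / sqrt (1 - m0)"
proof -
  have hi: "((\<lambda>s. 1 / sqrt (1 - s)) has_integral (- 2 * sqrt (1 - 1) - (- 2 * sqrt (1 - a)))) {a..1}"
  proof (rule fundamental_theorem_of_calculus_interior)
    show "a \<le> 1" by fact
    show "continuous_on {a..1} (\<lambda>s. - 2 * sqrt (1 - s))"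
      by (intro continuous_intros)
    fix s assume s: "s \<in> {a<..<1}"
    have d1: "((\<lambda>s. 1 - s) has_real_derivative (0 - 1)) (at s)"
      by (intro derivative_intros)
    have "((\<lambda>s. sqrt (1 - s)) has_real_derivative (inverse (sqrt (1 - s)) / 2 * (0 - 1))) (at s)"
      by (rule DERIV_chain2[of sqrt _ "\<lambda>s. 1 - s", OF DERIV_real_sqrt d1]) (use s in auto)
    then have "((\<lambda>s. - 2 * sqrt (1 - s)) has_real_derivative (- 2 * (inverse (sqrt (1 - s)) / 2 * (0 - 1)))) (at s)"
      by (rule DERIV_cmult)
    moreover have "- 2 * (inverse (sqrt (1 - s)) / 2 * (0 - 1)) = 1 / sqrt (1 - s)"
      by (simp add: field_simps)
    ultimately show "((\<lambda>s. - 2 * sqrt (1 - s)) has_vector_derivative 1 / sqrt (1 - s)) (at s)"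
      by (simp add: has_real_derivative_iff_has_vector_derivative)
  qed
  have "integral {a..1} (kf m) \<le> integral {a..1} (\<lambda>s. sqrt 2 / sqrt (1 - m0) * (1 / sqrt (1 - s)))"
  proof (rule integral_le_open)
    show "kf m integrable_on {a..1}" using kf_int_sub assms by auto
    show "(\<lambda>s. sqrt 2 / sqrt (1 - m0) * (1 / sqrt (1 - s))) integrable_on {a..1}"
      using hi by (intro integrable_on_mult_right) blast
    fix s assume s: "s \<in> {a<..<1}"
    have ms: "m * s \<le> m0" using assms s by (meson dual_order.trans less_eq_real_def mult_left_le s greaterThanLessThan_iff)
    have "1/2 * (1 - s) * (1 - m0) \<le> s * (1 - s) * (1 - m * s)"
      using assms s ms by (intro mult_mono) auto
    moreover have "0 < 1/2 * (1 - s) * (1 - m0)" using assms s by simp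
    ultimately have "1 / sqrt (s * (1 - s) * (1 - m * s)) \<le> 1 / sqrt (1/2 * (1 - s) * (1 - m0))"
      by (intro divide_left_mono mult_pos_pos) auto
    also have "\<dots> = 1 / (sqrt (1/2) * sqrt (1 - s) * sqrt (1 - m0))"
      by (simp only: real_sqrt_mult)
    also have "\<dots> = sqrt 2 / sqrt (1 - m0) * (1 / sqrt (1 - s))"
    proof -
      have "0 < sqrt (1 - s)" "0 < sqrt (1 - m0)" using assms s by auto
      then show ?thesis by (simp add: real_sqrt_divide field_simps)
    qed
    finally show "kf m s \<le> sqrt 2 / sqrt (1 - m0) * (1 / sqrt (1 - s))" by (simp add: kf_def)
  qed
  also have "\<dots> = sqrt 2 / sqrt (1 - m0) * (2 * sqrt (1 - a))"
    unfolding integral_mult_right integral_unique[OF hi] by simp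
  finally show ?thesis by (simp add: algebra_simps)
qed



lemma lim_ln1: "((\<lambda>l::real. C / (- ln (1 - l))) \<longlongrightarrow> 0) (at_left 1)"
  by real_asymp

lemma lim_ln2: "((\<lambda>l::real. C / (- ln (1 - 1 / l))) \<longlongrightarrow> 0) (at_right 1)"
  by real_asymp

lemma FF_mono_a:
  assumes "0 \<le> m" "m < 1" "0 \<le> a" "a \<le> b" "b \<le> 1"
  shows "FF a m \<le> FF b m"
proof -
  have "FF b m = FF a m + integral {a..b} (kf m)"
    unfolding FF_def
    using Henstock_Kurzweil_Integration.integral_combine[where a=0 and c=a and b=b and f="kf m"]
      assms kf_int_Icc[of m b] by auto
  then show ?thesis using kf_nonneg_int[of m a b] assms by auto
qed

lemma arcsin_arctan_id:
  fixes c :: real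
  assumes "0 < c" "c < 1"
  shows "2 * arcsin c / pi = 1 - (2 / pi) * arctan (sqrt (1 / c\<^sup>2 - 1))"
proof -
  define x where "x = c / sqrt (1 - c\<^sup>2)"
  have c2: "c\<^sup>2 < 1" using assms by (simp add: power_less_one_iff)
  have xpos: "0 < x" using assms c2 by (simp add: x_def)
  have "arcsin c = arctan x" unfolding x_def using assms by (intro arcsin_arctan) auto
  moreover have "1 / x = sqrt (1 / c\<^sup>2 - 1)"
  proof -
    have "1 / c\<^sup>2 - 1 = (1 - c\<^sup>2) / c\<^sup>2" using assms by (simp add: field_simps)
    then show ?thesis using assms by (simp add: x_def real_sqrt_divide)
  qed
  moreover have "arctan (1 / x) = pi / 2 - arctan x" using Transcendental.arctan_inverse[of x] xpos by simp
  ultimately have "arctan (sqrt (1 / c\<^sup>2 - 1)) = pi / 2 - arcsin c" by simp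
  then show ?thesis by (simp add: field_simps)
qed



theorem mainTheorem11:
  fixes c :: real
  assumes "0 < c" and "c < 1"
  shows "strict_antimono_on {0<..<1} (\<lambda>l. I_int (1 / c\<^sup>2) l / I_int 1 l)
       \<and> ((\<lambda>l. I_int (1 / c\<^sup>2) l / I_int 1 l) \<longlongrightarrow> 0) (at_left 1)
       \<and> ((\<lambda>l. I_int (1 / c\<^sup>2) l / I_int 1 l) \<longlongrightarrow> 1 - (2 / pi) * arctan (sqrt (1 / c\<^sup>2 - 1))) (at_right 0)
       \<and> strict_mono_on {1<..<1 / c\<^sup>2} (\<lambda>l. I_int (1 / c\<^sup>2) l / omega2 l)
       \<and> ((\<lambda>l. I_int (1 / c\<^sup>2) l / omega2 l) \<longlongrightarrow> 0) (at_right 1)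
       \<and> ((\<lambda>l. I_int (1 / c\<^sup>2) l / omega2 l) \<longlongrightarrow> 1) (at_left (1 / c\<^sup>2))"
proof -
  define u where "u = 1 / c\<^sup>2"
  define a where "a = c\<^sup>2"
  have a: "0 < a" "a < 1" using assms by (auto simp: a_def power_less_one_iff)
  have u: "1 < u" "1 / u = a" using a by (auto simp: u_def a_def)
  define f where "f l = FF a l / FF 1 l" for l
  have feq: "I_int u l / I_int 1 l = f l" if "0 < l" "l < 1" for l
    using I_part1[of l u] I_part1[of l 1] that u by (simp add: f_def)
  define g where "g l = FF (l / u) (1 / l) / FF 1 (1 / l)" for l
  have geq: "I_int u l / omega2 l = g l" if "1 < l" "l < u" for l
  proof -
    have "0 < sqrt (1 / l)" using that by simp
    then show ?thesis using I_part2[of l u] omega2_eq[of l] that by (simp add: g_def)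
  qed
  have FF1pos: "0 < FF 1 m" if "0 \<le> m" "m < 1" for m
    using FF_ge[of m 1] that by simp
  have FFnn: "0 \<le> FF b m" if "0 \<le> m" "m < 1" "0 \<le> b" "b \<le> 1" for m b
    using FF_ge[of m b] that by simp
  have P1: "strict_antimono_on {0<..<1} (\<lambda>l. I_int u l / I_int 1 l)"
  proof (rule monotone_onI)
    fix x y :: real assume "x \<in> {0<..<1}" "y \<in> {0<..<1}" "x < y"
    then show "I_int u y / I_int 1 y < I_int u x / I_int 1 x"
      using feq FF_ratio_strict[of x y a] a by (auto simp: f_def)
  qed
  have P2: "((\<lambda>l. I_int u l / I_int 1 l) \<longlongrightarrow> 0) (at_left 1)"
  proof -
    define C where "C = 2 * sqrt a / (1 - a)"
    have ev: "eventually (\<lambda>l. l \<in> {0<..<1}) (at_left (1::real))"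
      by (rule eventually_at_left_real) simp
    have "((\<lambda>l. f l) \<longlongrightarrow> 0) (at_left 1)"
    proof (rule tendsto_sandwich[OF _ _ tendsto_const lim_ln1[of C]])
      show "eventually (\<lambda>l. 0 \<le> f l) (at_left 1)"
        using ev by eventually_elim (use FFnn FF1pos a in \<open>auto simp: f_def\<close>)
      show "eventually (\<lambda>l. f l \<le> C / (- ln (1 - l))) (at_left 1)"
        using ev
      proof eventually_elim
        case (elim l)
        then have l: "0 < l" "l < 1" by auto
        have "0 < - ln (1 - l)" using l by simp
        then show ?case unfolding f_def
          using FF_upper[of l a a] FF_lower_ln[of l] FFnn[of l a] l a
          by (intro frac_le) (auto simp: C_def)
      qed
    qed
    then show ?thesis
      by (rule Lim_transform_eventually) (use ev feq in \<open>auto elim: eventually_mono\<close>)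
  qed
  have P3: "((\<lambda>l. I_int u l / I_int 1 l) \<longlongrightarrow> 1 - (2 / pi) * arctan (sqrt (1 / c\<^sup>2 - 1))) (at_right 0)"
  proof -
    define L where "L = FF a 0 / FF 1 0"
    have L: "L = 1 - (2 / pi) * arctan (sqrt (1 / c\<^sup>2 - 1))"
      using FF_0[of a] FF_0[of 1] a assms arcsin_arctan_id[of c] by (simp add: L_def a_def)
    have ev: "eventually (\<lambda>l. l \<in> {0<..<1}) (at_right (0::real))"
      by (rule eventually_at_right_real) simp
    have A0: "0 < FF a 0" "0 < FF 1 0" using FF_ge[of 0 a] FF_ge[of 0 1] a by auto
    have "((\<lambda>l. f l) \<longlongrightarrow> L) (at_right 0)"
    proof (rule tendsto_sandwich)
      show "eventually (\<lambda>l. L * sqrt (1 - l) \<le> f l) (at_right 0)"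
        using ev
      proof eventually_elim
        case (elim l)
        then have l: "0 < l" "l < 1" by auto
        have s: "0 < sqrt (1 - l)" using l by simp
        have "L * sqrt (1 - l) = FF a 0 / (FF 1 0 / sqrt (1 - l))" using s by (simp add: L_def)
        also have "\<dots> \<le> FF a l / FF 1 l"
          using FF_mono_m[of 0 l a] FF_upper0[of l 1] FF1pos[of l] A0 l a s
          by (intro frac_le) auto
        finally show ?case by (simp add: f_def)
      qed
      show "eventually (\<lambda>l. f l \<le> L / sqrt (1 - l)) (at_right 0)"
        using ev
      proof eventually_elim
        case (elim l)
        then have l: "0 < l" "l < 1" by auto
        have s: "0 < sqrt (1 - l)" using l by simp
        have "FF a l / FF 1 l \<le> (FF a 0 / sqrt (1 - l)) / FF 1 0"
          using FF_mono_m[of 0 l 1] FF_upper0[of l a] FFnn[of l a] A0 l a s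
          by (intro frac_le) auto
        also have "\<dots> = L / sqrt (1 - l)" by (simp add: L_def)
        finally show ?case by (simp add: f_def)
      qed
      have "((\<lambda>l. L * sqrt (1 - l)) \<longlongrightarrow> L * sqrt (1 - 0)) (at_right 0)"
        by (intro tendsto_intros)
      then show "((\<lambda>l. L * sqrt (1 - l)) \<longlongrightarrow> L) (at_right 0)" by simp
      have "((\<lambda>l. L / sqrt (1 - l)) \<longlongrightarrow> L / sqrt (1 - 0)) (at_right 0)"
        by (intro tendsto_intros) auto
      then show "((\<lambda>l. L / sqrt (1 - l)) \<longlongrightarrow> L) (at_right 0)" by simp
    qed
    then have "((\<lambda>l. I_int u l / I_int 1 l) \<longlongrightarrow> L) (at_right 0)"
      by (rule Lim_transform_eventually) (use ev feq in \<open>auto elim: eventually_mono\<close>)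
    then show ?thesis using L by simp
  qed
  have P4: "strict_mono_on {1<..<u} (\<lambda>l. I_int u l / omega2 l)"
  proof (rule strict_mono_onI)
    fix x y :: real assume xy: "x \<in> {1<..<u}" "y \<in> {1<..<u}" "x < y"
    then have m: "0 \<le> 1 / y" "1 / y < 1 / x" "1 / x < 1" "0 < x / u" "x / u < 1" "x / u \<le> y / u" "y / u \<le> 1"
      by (auto simp: field_simps)
    have "g x < FF (x / u) (1 / y) / FF 1 (1 / y)"
      unfolding g_def by (rule FF_ratio_strict) (use m in auto)
    also have "\<dots> \<le> g y" unfolding g_def
      using FF_mono_a[of "1/y" "x/u" "y/u"] FF1pos[of "1/y"] m by (intro divide_right_mono) auto
    finally show "I_int u x / omega2 x < I_int u y / omega2 y" using geq xy by auto
  qed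
  have P5: "((\<lambda>l. I_int u l / omega2 l) \<longlongrightarrow> 0) (at_right 1)"
  proof -
    define l0 where "l0 = (1 + u) / 2"
    define b0 where "b0 = l0 / u"
    have l0: "1 < l0" "l0 < u" "b0 < 1" "0 < b0" using u by (auto simp: l0_def b0_def field_simps)
    define C where "C = 2 / (1 - b0)"
    have ev: "eventually (\<lambda>l. l \<in> {1<..<l0}) (at_right (1::real))"
      by (rule eventually_at_right_real) (use l0 in simp)
    have "((\<lambda>l. g l) \<longlongrightarrow> 0) (at_right 1)"
    proof (rule tendsto_sandwich[OF _ _ tendsto_const lim_ln2[of C]])
      show "eventually (\<lambda>l. 0 \<le> g l) (at_right 1)"
        using ev
      proof eventually_elim
        case (elim l)
        then have "0 \<le> 1 / l" "1 / l < 1" "0 \<le> l / u" "l / u \<le> 1" using l0 by (auto simp: field_simps)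
        then show ?case using FFnn FF1pos by (auto simp: g_def)
      qed
      show "eventually (\<lambda>l. g l \<le> C / (- ln (1 - 1 / l))) (at_right 1)"
        using ev
      proof eventually_elim
        case (elim l)
        then have l: "0 < 1 / l" "1 / l < 1" "0 \<le> l / u" "l / u \<le> b0" "l / u \<le> 1" using l0 u
          by (auto simp: field_simps b0_def)
        have "0 < - ln (1 - 1 / l)" using l by simp
        moreover have "FF (l / u) (1 / l) \<le> C"
        proof -
          have "FF (l / u) (1 / l) \<le> 2 * sqrt (l / u) / (1 - b0)"
            using FF_upper[of "1/l" "l/u" b0] l l0 by auto
          also have "\<dots> \<le> 2 * 1 / (1 - b0)" using l l0 by (intro divide_right_mono mult_left_mono) auto
          finally show ?thesis by (simp add: C_def)
        qed
        ultimately show ?case unfolding g_def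
          using FF_lower_ln[of "1/l"] FFnn[of "1/l" "l/u"] l
          by (intro frac_le) auto
      qed
    qed
    then show ?thesis
      by (rule Lim_transform_eventually) (use ev geq l0 in \<open>auto elim: eventually_mono\<close>)
  qed
  have P6: "((\<lambda>l. I_int u l / omega2 l) \<longlongrightarrow> 1) (at_left u)"
  proof -
    define l0 where "l0 = (1 + u) / 2"
    define m0 where "m0 = 1 / l0"
    have l0: "1 < l0" "l0 < u" "m0 < 1" "0 < m0" "1 / 2 \<le> l0 / u" using u by (auto simp: l0_def m0_def field_simps)
    define D where "D = 2 * sqrt 2 / sqrt (1 - m0)"
    have ev: "eventually (\<lambda>l. l \<in> {l0<..<u}) (at_left u)"
      by (rule eventually_at_left_real) (use l0 in simp)
    have "((\<lambda>l. g l) \<longlongrightarrow> 1) (at_left u)"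
    proof (rule tendsto_sandwich[OF _ _ _ tendsto_const])
      have pts: "1 - D * sqrt (1 - l / u) \<le> g l \<and> g l \<le> 1" if "l \<in> {l0<..<u}" for l
      proof -
        have l: "0 \<le> 1 / l" "1 / l \<le> m0" "1 / 2 \<le> l / u" "l / u \<le> 1" "0 \<le> l / u"
          using that l0 u by (auto simp: field_simps m0_def)
        have m1: "1 / l < 1" using l(2) l0(3) by linarith
        define T where "T = integral {l/u..1} (kf (1/l))"
        have sp: "FF 1 (1/l) = FF (l/u) (1/l) + T" unfolding T_def using FF_split[of "1/l" "l/u"] l m1 by auto
        have T: "0 \<le> T" "T \<le> D * sqrt (1 - l / u)"
          using kf_nonneg_int[of "1/l" "l/u" 1] tail_upper[of "1/l" m0 "l/u"] l l0 m1
          by (auto simp: T_def D_def)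
        have F1: "1 \<le> FF 1 (1/l)" using FF_ge[of "1/l" 1] l m1 by auto
        have "g l = 1 - T / FF 1 (1/l)" using F1 sp by (simp add: g_def field_simps)
        moreover have "T / FF 1 (1/l) \<le> T" using F1 T by (simp add: divide_le_eq mult_le_cancel_left1)
        moreover have "0 \<le> T / FF 1 (1/l)" using F1 T by simp
        ultimately show ?thesis using T by auto
      qed
      show "eventually (\<lambda>l. 1 - D * sqrt (1 - l / u) \<le> g l) (at_left u)"
        using ev by eventually_elim (use pts in auto)
      show "eventually (\<lambda>l. g l \<le> 1) (at_left u)"
        using ev by eventually_elim (use pts in auto)
      have "((\<lambda>l. 1 - D * sqrt (1 - l / u)) \<longlongrightarrow> 1 - D * sqrt (1 - u / u)) (at_left u)"
        using u by (intro tendsto_intros) auto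
      then show "((\<lambda>l. 1 - D * sqrt (1 - l / u)) \<longlongrightarrow> 1) (at_left u)" using u by simp
    qed
    then show ?thesis
      by (rule Lim_transform_eventually) (use ev geq l0 in \<open>auto elim: eventually_mono\<close>)
  qed
  show ?thesis using P1 P2 P3 P4 P5 P6 unfolding u_def by blast
qed

end
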